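(* Let $G$ be a complete $t$-partite graph with $t\ge2$ parts, at least one of which has size greater than $1$. If $G$ is $\mathcal{C}$-$\mathrm{MH}$, then $t=2$.
   Context: Subgraphs are induced. A homomorphism maps edges to edges; a monomorphism is an injective homomorphism. A graph $G$ is $\mathcal{C}$-$\mathrm{MH}$ if every monomorphism from a finite connected induced subgraph of $G$ into $G$ extends to a homomorphism $G\to G$. *)

theory Defs
  imports Main
begin

text \<open>A graph is a vertex set V together with an adjacency relation E.
  Subgraphs are induced: the induced subgraph on S has vertex set S and edges E restricted to S.\<close>

definition graph_hom :: "'a set \<Rightarrow> ('a \<Rightarrow> 'a \<Rightarrow> bool) \<Rightarrow> 'b set \<Rightarrow> ('b \<Rightarrow> 'b \<Rightarrow> bool) \<Rightarrow> ('a \<Rightarrow> 'b) \<Rightarrow> bool" where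
  "graph_hom V E W F f \<longleftrightarrow> f ` V \<subseteq> W \<and> (\<forall>x\<in>V. \<forall>y\<in>V. E x y \<longrightarrow> F (f x) (f y))"

definition graph_mono :: "'a set \<Rightarrow> ('a \<Rightarrow> 'a \<Rightarrow> bool) \<Rightarrow> 'b set \<Rightarrow> ('b \<Rightarrow> 'b \<Rightarrow> bool) \<Rightarrow> ('a \<Rightarrow> 'b) \<Rightarrow> bool" where
  "graph_mono V E W F f \<longleftrightarrow> graph_hom V E W F f \<and> inj_on f V"

definition connected_induced :: "('a \<Rightarrow> 'a \<Rightarrow> bool) \<Rightarrow> 'a set \<Rightarrow> bool" where
  "connected_induced E S \<longleftrightarrow> S \<noteq> {} \<and>
     (\<forall>x\<in>S. \<forall>y\<in>S. (\<lambda>u v. u \<in> S \<and> v \<in> S \<and> E u v)\<^sup>*\<^sup>* x y)"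

definition C_MH :: "'a set \<Rightarrow> ('a \<Rightarrow> 'a \<Rightarrow> bool) \<Rightarrow> bool" where
  "C_MH V E \<longleftrightarrow> (\<forall>S f. S \<subseteq> V \<longrightarrow> finite S \<longrightarrow> connected_induced E S \<longrightarrow>
      graph_mono S E V E f \<longrightarrow> (\<exists>g. graph_hom V E V E g \<and> (\<forall>x\<in>S. g x = f x)))"

text \<open>(V,E) is the complete t-partite graph whose parts are the (nonempty) fibres of p over {0..<t}.\<close>
definition complete_multipartite :: "'a set \<Rightarrow> ('a \<Rightarrow> 'a \<Rightarrow> bool) \<Rightarrow> ('a \<Rightarrow> nat) \<Rightarrow> nat \<Rightarrow> bool" where
  "complete_multipartite V E p t \<longleftrightarrow> p ` V = {..<t} \<and>
     (\<forall>x y. E x y \<longleftrightarrow> x \<in> V \<and> y \<in> V \<and> p x \<noteq> p y)"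

end

theory Submission
  imports Defs
begin

lemma hom_same_part:
  assumes cm: "complete_multipartite V E p t"
    and g: "graph_hom V E V E g"
    and u: "u \<in> V" and v: "v \<in> V" and uv: "p u = p v"
  shows "p (g u) = p (g v)"
proof -
  have pV: "p ` V = {..<t}" and Ed: "\<And>x y. E x y \<longleftrightarrow> x \<in> V \<and> y \<in> V \<and> p x \<noteq> p y"
    using cm unfolding complete_multipartite_def by auto
  have gV: "\<And>x. x \<in> V \<Longrightarrow> g x \<in> V" and gE: "\<And>x y. x \<in> V \<Longrightarrow> y \<in> V \<Longrightarrow> E x y \<Longrightarrow> E (g x) (g y)"
    using g unfolding graph_hom_def by auto
  define a where "a = p u"
  define r where "r i = (if i = a then u else SOME w. w \<in> V \<and> p w = i)" for i
  have r: "r i \<in> V \<and> p (r i) = i" if "i < t" for i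
  proof (cases "i = a")
    case True thus ?thesis using u by (simp add: r_def a_def)
  next
    case False
    have "\<exists>w. w \<in> V \<and> p w = i" using that pV by (metis imageE lessThan_iff)
    then have "(SOME w. w \<in> V \<and> p w = i) \<in> V \<and> p (SOME w. w \<in> V \<and> p w = i) = i"
      by (rule someI_ex)
    moreover have "r i = (SOME w. w \<in> V \<and> p w = i)" using False by (simp add: r_def)
    ultimately show ?thesis by simp
  qed
  define h where "h i = p (g (r i))" for i
  have hinj: "inj_on h {..<t}"
  proof (rule inj_onI)
    fix i j assume i: "i \<in> {..<t}" and j: "j \<in> {..<t}" and e: "h i = h j"
    show "i = j"
    proof (rule ccontr)
      assume "i \<noteq> j"
      then have "E (r i) (r j)" using r i j Ed by auto
      then have "E (g (r i)) (g (r j))" using gE r i j by auto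
      then show False using e Ed h_def by auto
    qed
  qed
  have hmap: "h ` {..<t} \<subseteq> {..<t}" using r gV pV h_def by auto
  have hsurj: "h ` {..<t} = {..<t}"
    using hinj hmap by (simp add: endo_inj_surj)
  have "p (g v) \<in> {..<t}" using gV v pV by auto
  then obtain i where i: "i < t" and hi: "h i = p (g v)" using hsurj by (metis imageE lessThan_iff)
  have "i = a"
  proof (rule ccontr)
    assume "i \<noteq> a"
    then have "E (r i) v" using r i v Ed uv a_def by auto
    then have "E (g (r i)) (g v)" using gE r i v by auto
    then show False using hi Ed h_def by auto
  qed
  then show ?thesis using hi h_def r_def by simp
qed

theorem lemma7p2:
  fixes V :: "'a set" and E :: "'a \<Rightarrow> 'a \<Rightarrow> bool" and p :: "'a \<Rightarrow> nat" and t :: nat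
  assumes "complete_multipartite V E p t"
    and "t \<ge> 2"
    and "\<exists>x\<in>V. \<exists>y\<in>V. x \<noteq> y \<and> p x = p y"
    and "C_MH V E"
  shows "t = 2"
proof (rule ccontr)
  assume nt: "t \<noteq> 2"
  have pV: "p ` V = {..<t}" and Ed: "\<And>x y. E x y \<longleftrightarrow> x \<in> V \<and> y \<in> V \<and> p x \<noteq> p y"
    using assms(1) unfolding complete_multipartite_def by auto
  obtain x y where x: "x \<in> V" and y: "y \<in> V" and xy: "x \<noteq> y" "p x = p y" using assms(3) by blast
  have px: "p x < t" using x pV by auto
  have "\<exists>b c. b < t \<and> c < t \<and> b \<noteq> c \<and> b \<noteq> p x \<and> c \<noteq> p x"
  proof -
    have "t \<ge> 3" using nt assms(2) by simp
    show ?thesis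
    proof (cases "p x = 0")
      case True thus ?thesis using \<open>t \<ge> 3\<close> by (intro exI[of _ 1] exI[of _ 2]) simp
    next
      case F0: False
      show ?thesis
      proof (cases "p x = 1")
        case True thus ?thesis using \<open>t \<ge> 3\<close> by (intro exI[of _ 0] exI[of _ 2]) simp
      next
        case False thus ?thesis using F0 \<open>t \<ge> 3\<close> by (intro exI[of _ 0] exI[of _ 1]) simp
      qed
    qed
  qed
  then obtain b c where bc: "b < t" "c < t" "b \<noteq> c" "b \<noteq> p x" "c \<noteq> p x" by blast
  obtain z where z: "z \<in> V" "p z = b" using bc pV by (metis imageE lessThan_iff)
  obtain w where w: "w \<in> V" "p w = c" using bc pV by (metis imageE lessThan_iff)
  define S where "S = {x, z, y}"
  define f where "f = (\<lambda>v. if v = y then w else v)"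
  have zx: "z \<noteq> x" "z \<noteq> y" using z bc xy by auto
  have SV: "S \<subseteq> V" using x y z S_def by auto
  have fin: "finite S" by (simp add: S_def)
  let ?R = "\<lambda>u v. u \<in> S \<and> v \<in> S \<and> E u v"
  have R1: "?R x z" "?R z x" "?R z y" "?R y z" using x y z bc xy Ed S_def by auto
  have conn: "connected_induced E S"
    unfolding connected_induced_def
  proof (intro conjI ballI)
    show "S \<noteq> {}" by (simp add: S_def)
  next
    fix u v assume u: "u \<in> S" and v: "v \<in> S"
    have toz: "?R\<^sup>*\<^sup>* q z" if "q \<in> S" for q
    proof -
      have "q = x \<or> q = z \<or> q = y" using that unfolding S_def by blast
      then show ?thesis using R1(1) R1(4) by (metis (no_types, lifting) r_into_rtranclp rtranclp.rtrancl_refl)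
    qed
    have fromz: "?R\<^sup>*\<^sup>* z q" if "q \<in> S" for q
    proof -
      have "q = x \<or> q = z \<or> q = y" using that unfolding S_def by blast
      then show ?thesis using R1(2) R1(3) by (metis (no_types, lifting) r_into_rtranclp rtranclp.rtrancl_refl)
    qed
    show "?R\<^sup>*\<^sup>* u v" using toz[OF u] fromz[OF v] by (rule rtranclp_trans)
  qed
  have mono: "graph_mono S E V E f"
    unfolding graph_mono_def graph_hom_def
  proof (intro conjI)
    show "f ` S \<subseteq> V" using x z w S_def f_def by auto
    show "\<forall>u\<in>S. \<forall>v\<in>S. E u v \<longrightarrow> E (f u) (f v)"
      using x y z w bc xy zx Ed unfolding S_def f_def by auto
    show "inj_on f S" using xy zx bc z w unfolding S_def f_def inj_on_def by auto
  qed
  obtain g where g: "graph_hom V E V E g" and gf: "\<forall>v\<in>S. g v = f v"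
    using assms(4) SV fin conn mono unfolding C_MH_def by blast
  have "p (g x) = p (g y)" using hom_same_part[OF assms(1) g x y xy(2)] .
  moreover have "g x = x" "g y = w" using gf xy unfolding S_def f_def by auto
  ultimately show False using w bc by simp
qed

end
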